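(* Let $d\ge 1$ and $n\ge 1$ be integers, and let $W_d(x)=\pi^{-d}\prod_{i=1}^d (1-x_i^2)^{-1/2}$ on $[-1,1]^d$. Let $I^E_n, I^O_n$ be the one-dimensional functionals defined as follows: if $n=2m$, $$I^E_n f := \frac{1}{n}\Big(\tfrac12 f(-1)+\sum_{j=1}^{m-1} f\big(\cos\tfrac{2j\pi}{n}\big)+\tfrac12 f(1)\Big),\qquad I^O_n f := \frac{1}{n}\sum_{j=1}^{m} f\big(\cos\tfrac{(2j-1)\pi}{n}\big);$$ if $n=2m-1$, $$I^E_n f := \frac{1}{n}\Big(\sum_{j=1}^{m-1} f\big(\cos\tfrac{2j\pi}{n}\big)+\tfrac12 f(1)\Big),\qquad I^O_n f := \frac{1}{n}\Big(\tfrac12 f(-1)+\sum_{j=1}^{m-1} f\big(\cos\tfrac{(2j-1)\pi}{n}\big)\Big).$$ For $\sigma=(\sigma_1,\ldots,\sigma_d)\in\{E,O\}^d$, let $\tilde\sigma$ be obtained by swapping $E\leftrightarrow O$ in each coordinate, and for $f:[-1,1]^d\to\mathbb{R}$ define $$I^{\sigma}_{n,d} f := I^{\sigma_1}_n\cdots I^{\sigma_d}_n f + I^{\tilde\sigma_1}_n\cdots I^{\tilde\sigma_d}_n f,$$ where $I^{\sigma_1}_n\cdots I^{\sigma_d}_n f$ denotes the $d$-fold sum in which $I^{\sigma_k}_n$ is applied to the $k$-th variable of $f$. Then for each $\sigma\in\{E,O\}^d$ the cubature formula $$\int_{[-1,1]^d} f(x)\,W_d(x)\,dx = 2^{d-1}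 I^{\sigma}_{n,d} f$$ holds for every polynomial $f$ in $d$ variables of total degree at most $2n-1$, and its number of nodes $N$ satisfies $N = 2\left(\lfloor n/2\rfloor\right)^d\,(1+O(n^{-1}))$ as $n\to\infty$.
   Context: The weight $W_d$ is the product Chebyshev weight, normalized so that $\int_{[-1,1]^d}W_d(x)\,dx=1$. The nodes of the formula are the points of the two product grids $G_{\sigma_1}\times\cdots\times G_{\sigma_d}$ and $G_{\tilde\sigma_1}\times\cdots\times G_{\tilde\sigma_d}$, where $G_E$ (resp. $G_O$) is the set of points $\cos\frac{j\pi}{n}$, $0\le j\le n$, at which $I^E_n$ (resp. $I^O_n$) evaluates $f$ (even $j$, resp. odd $j$); $N$ is the total number of these nodes. *)

theory Defs
  imports "HOL-Analysis.Analysis" "HOL-Probability.Probability" "HOL-Library.Landau_Symbols"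
begin

text \<open>Points of R^d are functions nat => real; only coordinates i < d are relevant.\<close>

datatype EO = Ev | Od

fun swapEO :: "EO \<Rightarrow> EO" where
  "swapEO Ev = Od" | "swapEO Od = Ev"

definition chebW :: "nat \<Rightarrow> (nat \<Rightarrow> real) \<Rightarrow> real" where
  "chebW d x = (\<Prod>i<d. 1 / sqrt (1 - (x i)^2)) / pi ^ d"

definition IE :: "nat \<Rightarrow> (real \<Rightarrow> real) \<Rightarrow> real" where
  "IE n g = (if even n then
      (let m = n div 2 in (1 / real n) * (1/2 * g (-1) + (\<Sum>j=1..m-1. g (cos (2 * real j * pi / real n))) + 1/2 * g 1))
    else
      (let m = (n + 1) div 2 in (1 / real n) * ((\<Sum>j=1..m-1. g (cos (2 * real j * pi / real n))) + 1/2 * g 1)))"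

definition IO :: "nat \<Rightarrow> (real \<Rightarrow> real) \<Rightarrow> real" where
  "IO n g = (if even n then
      (let m = n div 2 in (1 / real n) * (\<Sum>j=1..m. g (cos ((2 * real j - 1) * pi / real n))))
    else
      (let m = (n + 1) div 2 in (1 / real n) * (1/2 * g (-1) + (\<Sum>j=1..m-1. g (cos ((2 * real j - 1) * pi / real n))))))"

definition I1 :: "EO \<Rightarrow> nat \<Rightarrow> (real \<Rightarrow> real) \<Rightarrow> real" where
  "I1 s n g = (case s of Ev \<Rightarrow> IE n g | Od \<Rightarrow> IO n g)"

fun iterI :: "(nat \<Rightarrow> EO) \<Rightarrow> nat \<Rightarrow> nat \<Rightarrow> ((nat \<Rightarrow> real) \<Rightarrow> real) \<Rightarrow> (nat \<Rightarrow> real) \<Rightarrow> real" where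
  "iterI \<sigma> n 0 f x = f x"
| "iterI \<sigma> n (Suc k) f x = I1 (\<sigma> k) n (\<lambda>t. iterI \<sigma> n k f (x(k := t)))"

definition Ind :: "(nat \<Rightarrow> EO) \<Rightarrow> nat \<Rightarrow> nat \<Rightarrow> ((nat \<Rightarrow> real) \<Rightarrow> real) \<Rightarrow> real" where
  "Ind \<sigma> n d f = iterI \<sigma> n d f (\<lambda>_. 0) + iterI (swapEO \<circ> \<sigma>) n d f (\<lambda>_. 0)"

definition poly_deg_le :: "nat \<Rightarrow> nat \<Rightarrow> ((nat \<Rightarrow> real) \<Rightarrow> real) \<Rightarrow> bool" where
  "poly_deg_le d k f \<longleftrightarrow> (\<exists>c :: (nat \<Rightarrow> nat) \<Rightarrow> real. \<forall>x.
     f x = (\<Sum>\<alpha> \<in> {\<alpha>. (\<forall>i\<ge>d. \<alpha> i = 0) \<and> (\<Sum>i<d. \<alpha> i) \<le> k}. c \<alpha> * (\<Prod>i<d. x i ^ \<alpha> i)))"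

definition G :: "EO \<Rightarrow> nat \<Rightarrow> real set" where
  "G s n = {cos (real j * pi / real n) | j. j \<le> n \<and> (case s of Ev \<Rightarrow> even j | Od \<Rightarrow> odd j)}"

definition grid :: "(nat \<Rightarrow> EO) \<Rightarrow> nat \<Rightarrow> nat \<Rightarrow> (nat \<Rightarrow> real) set" where
  "grid \<sigma> n d = PiE {..<d} (\<lambda>i. G (\<sigma> i) n)"

definition num_nodes :: "(nat \<Rightarrow> EO) \<Rightarrow> nat \<Rightarrow> nat \<Rightarrow> nat" where
  "num_nodes \<sigma> n d = card (grid \<sigma> n d \<union> grid (swapEO \<circ> \<sigma>) n d)"

end

theory Submission
  imports Defs
begin


lemma cos_pow_expand:
  "(2 * cos x)^a = (\<Sum>i\<le>a. real (a choose i) * cos ((2 * real i - real a) * x))"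
proof -
  have e: "complex_of_real (2 * cos x) = cis x + cis (-x)"
    by (simp add: complex_eq_iff)
  have "complex_of_real ((2 * cos x)^a) = (cis x + cis (-x))^a"
    by (simp only: of_real_power e)
  also have "\<dots> = (\<Sum>i\<le>a. of_nat (a choose i) * cis x ^ i * cis (-x) ^ (a - i))"
    by (rule binomial_ring)
  also have "\<dots> = (\<Sum>i\<le>a. of_nat (a choose i) * cis ((2 * real i - real a) * x))"
  proof (rule sum.cong[OF refl])
    fix i assume "i \<in> {..a}"
    then have "real (a - i) = real a - real i" by auto
    then have "cis x ^ i * cis (-x) ^ (a - i) = cis ((2 * real i - real a) * x)"
      by (simp only: Complex.DeMoivre cis_mult) (simp add: algebra_simps)
    then show "of_nat (a choose i) * cis x ^ i * cis (-x) ^ (a - i) = of_nat (a choose i) * cis ((2 * real i - real a) * x)"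
      by (simp add: mult.assoc)
  qed
  finally have "Re (complex_of_real ((2 * cos x)^a)) = Re (\<Sum>i\<le>a. of_nat (a choose i) * cis ((2 * real i - real a) * x))"
    by simp
  then show ?thesis by simp
qed

lemma sum_cos_int:
  assumes "n > 0"
  shows "(\<Sum>j<2*n. cos (real_of_int m * real j * pi / real n)) = (if (2*int n) dvd m then 2 * real n else 0)"
proof (cases "(2*int n) dvd m")
  case True
  then obtain k where k: "m = 2 * int n * k" by blast
  have "cos (real_of_int m * real j * pi / real n) = 1" for j
  proof -
    have "real_of_int m * real j * pi / real n = real_of_int (k * int j) * 2 * pi"
      using assms by (simp add: k field_simps)
    then show ?thesis by (simp only: cos_one_2pi_int) blast
  qed
  then show ?thesis using True by simp
next
  case False
  define z where "z = cis (real_of_int m * pi / real n)"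
  have z1: "z \<noteq> 1"
  proof
    assume "z = 1"
    then have "cos (real_of_int m * pi / real n) = 1" unfolding z_def
      by (metis cis.simps(1) one_complex.simps(1))
    then obtain t :: int where "real_of_int m * pi / real n = t * 2 * pi" by (auto simp: cos_one_2pi_int)
    then have "real_of_int m = real_of_int (2 * int n * t)" using assms by (simp add: field_simps)
    then have "m = 2 * int n * t" by (simp only: of_int_eq_iff)
    then show False using False by simp
  qed
  have zn: "z ^ (2*n) = 1"
  proof -
    have "z ^ (2*n) = cis (real (2*n) * (real_of_int m * pi / real n))" unfolding z_def Complex.DeMoivre ..
    also have "\<dots> = cis (2 * pi * real_of_int m)" using assms by (simp add: field_simps)
    finally have "z ^ (2*n) = cis (2 * pi * real_of_int m)" .
    then show ?thesis by simp
  qed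
  have "(\<Sum>j<2*n. z ^ j) = 0" using geometric_sum[OF z1, of "2*n"] zn by simp
  then have "Re (\<Sum>j<2*n. z ^ j) = 0" by simp
  moreover have "Re (z ^ j) = cos (real_of_int m * real j * pi / real n)" for j
    unfolding z_def Complex.DeMoivre by (simp add: field_simps)
  ultimately show ?thesis using False by simp
qed



lemma split_2n:
  fixes h :: "nat \<Rightarrow> real"
  assumes n: "n > 0" and sym: "\<And>j. j \<in> {1..<n} \<Longrightarrow> h (2*n - j) = h j"
  shows "(\<Sum>j<2*n. h j) = h 0 + h n + 2 * (\<Sum>j\<in>{1..<n}. h j)"
proof -
  have "(\<Sum>j<2*n. h j) = (\<Sum>j\<in>{0..<n}. h j) + (\<Sum>j\<in>{n..<2*n}. h j)"
    by (simp add: atLeast0LessThan[symmetric] sum.atLeastLessThan_concat)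
  also have "(\<Sum>j\<in>{0..<n}. h j) = h 0 + (\<Sum>j\<in>{1..<n}. h j)"
    using n by (simp add: sum.atLeast_Suc_lessThan)
  also have "(\<Sum>j\<in>{n..<2*n}. h j) = h n + (\<Sum>j\<in>{Suc n..<2*n}. h j)"
    using n by (simp add: sum.atLeast_Suc_lessThan)
  also have "(\<Sum>j\<in>{Suc n..<2*n}. h j) = (\<Sum>j\<in>{1..<n}. h (2*n - j))"
    by (rule sum.reindex_bij_witness[of _ "\<lambda>j. 2*n - j" "\<lambda>j. 2*n - j"]) auto
  also have "\<dots> = (\<Sum>j\<in>{1..<n}. h j)" using sym by simp
  finally show ?thesis by simp
qed

lemma sum_even_part:
  fixes \<phi> :: "nat \<Rightarrow> real"
  shows "(\<Sum>j\<in>{1..<n}. if even j then \<phi> j else 0) = (\<Sum>i=1..(n-1) div 2. \<phi> (2*i))"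
proof -
  have "(\<Sum>j\<in>{1..<n}. if even j then \<phi> j else 0) = (\<Sum>j\<in>{j\<in>{1..<n}. even j}. \<phi> j)"
    by (rule sum.inter_filter[symmetric]) simp
  also have "{j\<in>{1..<n}. even j} = (\<lambda>i. 2*i) ` {1..(n-1) div 2}"
  proof (rule set_eqI, rule iffI)
    fix j assume "j \<in> {j\<in>{1..<n}. even j}"
    then obtain i where "j = 2*i" "1 \<le> j" "j < n" by auto
    then show "j \<in> (\<lambda>i. 2*i) ` {1..(n-1) div 2}" by (intro image_eqI[of _ _ i]) auto
  qed auto
  also have "(\<Sum>j\<in>(\<lambda>i. 2*i) ` {1..(n-1) div 2}. \<phi> j) = (\<Sum>i=1..(n-1) div 2. \<phi> (2*i))"
    by (rule sum.reindex_cong[of "\<lambda>i. 2*i"]) (auto simp: inj_on_def)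
  finally show ?thesis .
qed

lemma sum_odd_part:
  fixes \<phi> :: "nat \<Rightarrow> real"
  shows "(\<Sum>j\<in>{1..<n}. if odd j then \<phi> j else 0) = (\<Sum>i=1..n div 2. \<phi> (2*i - 1))"
proof -
  have "(\<Sum>j\<in>{1..<n}. if odd j then \<phi> j else 0) = (\<Sum>j\<in>{j\<in>{1..<n}. odd j}. \<phi> j)"
    by (rule sum.inter_filter[symmetric]) simp
  also have "{j\<in>{1..<n}. odd j} = (\<lambda>i. 2*i - 1) ` {1..n div 2}"
  proof (rule set_eqI, rule iffI)
    fix j assume "j \<in> {j\<in>{1..<n}. odd j}"
    then obtain i where "j = 2*i + 1" "j < n" by (auto elim: oddE)
    then show "j \<in> (\<lambda>i. 2*i - 1) ` {1..n div 2}" by (intro image_eqI[of _ _ "i+1"]) auto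
  qed auto
  also have "(\<Sum>j\<in>(\<lambda>i. 2*i - 1) ` {1..n div 2}. \<phi> j) = (\<Sum>i=1..n div 2. \<phi> (2*i - 1))"
    by (rule sum.reindex_cong[of "\<lambda>i. 2*i - 1"]) (auto simp: inj_on_def)
  finally show ?thesis .
qed

definition QS :: "EO \<Rightarrow> nat \<Rightarrow> (real \<Rightarrow> real) \<Rightarrow> real" where
  "QS s n g = (\<Sum>j<2*n. if (case s of Ev \<Rightarrow> even j | Od \<Rightarrow> odd j) then g (cos (real j * pi / real n)) else 0) / (2 * real n)"

lemma cos_sym: assumes "n > 0" "j \<le> 2*n" shows "cos (real (2*n - j) * pi / real n) = cos (real j * pi / real n)"
proof -
  have "real (2*n - j) * pi / real n = 2 * pi - real j * pi / real n"
    using assms by (simp add: of_nat_diff field_simps)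
  then show ?thesis by simp
qed

lemma I1_QS: assumes "n > 0" shows "I1 s n g = QS s n g"
proof -
  let ?\<phi> = "\<lambda>j. g (cos (real j * pi / real n))"
  define P where "P = (\<lambda>j::nat. case s of Ev \<Rightarrow> even j | Od \<Rightarrow> odd j)"
  have "(\<Sum>j<2*n. if P j then ?\<phi> j else 0) = (if P 0 then ?\<phi> 0 else 0) + (if P n then ?\<phi> n else 0)
      + 2 * (\<Sum>j\<in>{1..<n}. if P j then ?\<phi> j else 0)"
  proof (rule split_2n[OF assms])
    fix j assume j: "j \<in> {1..<n}"
    then have "P (2*n - j) = P j" by (cases s) (auto simp: P_def)
    moreover have "?\<phi> (2*n - j) = ?\<phi> j" using cos_sym[OF assms, of j] j by simp
    ultimately show "(if P (2*n - j) then ?\<phi> (2*n - j) else 0) = (if P j then ?\<phi> j else 0)" by simp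
  qed
  then have main: "QS s n g = ((if P 0 then ?\<phi> 0 else 0) + (if P n then ?\<phi> n else 0)
      + 2 * (\<Sum>j\<in>{1..<n}. if P j then ?\<phi> j else 0)) / (2 * real n)"
    unfolding QS_def P_def by simp
  have phin: "?\<phi> n = g (-1)" using assms by simp
  have phi0: "?\<phi> 0 = g 1" by simp
  show ?thesis
  proof (cases s)
    case Ev
    have "(\<Sum>j\<in>{1..<n}. if P j then ?\<phi> j else 0) = (\<Sum>i=1..(n-1) div 2. ?\<phi> (2*i))"
      unfolding P_def Ev EO.case by (rule sum_even_part)
    also have "\<dots> = (\<Sum>i=1..(n-1) div 2. g (cos (2 * real i * pi / real n)))"
      by (rule sum.cong) auto
    finally have s: "(\<Sum>j\<in>{1..<n}. if P j then ?\<phi> j else 0) = (\<Sum>i=1..(n-1) div 2. g (cos (2 * real i * pi / real n)))" .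
    moreover note s
    moreover have "even n \<Longrightarrow> (n-1) div 2 = n div 2 - 1" by (auto elim!: evenE)
    moreover have "odd n \<Longrightarrow> (n-1) div 2 = (n+1) div 2 - 1" by (auto elim!: oddE)
    ultimately show ?thesis using main phin phi0 assms
      by (simp add: I1_def Ev IE_def Let_def P_def field_simps)
  next
    case Od
    have "(\<Sum>j\<in>{1..<n}. if P j then ?\<phi> j else 0) = (\<Sum>i=1..n div 2. ?\<phi> (2*i - 1))"
      unfolding P_def Od EO.case by (rule sum_odd_part)
    also have "\<dots> = (\<Sum>i=1..n div 2. g (cos ((2 * real i - 1) * pi / real n)))"
      by (rule sum.cong) (auto simp: of_nat_diff)
    finally have s: "(\<Sum>j\<in>{1..<n}. if P j then ?\<phi> j else 0) = (\<Sum>i=1..n div 2. g (cos ((2 * real i - 1) * pi / real n)))" .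
    have "odd n \<Longrightarrow> n div 2 = (n+1) div 2 - 1" by (auto elim!: oddE)
    then show ?thesis using main phin phi0 assms s
      by (cases "even n") (simp_all add: I1_def Od IO_def Let_def P_def field_simps)
  qed
qed



definition cc :: "nat \<Rightarrow> real" where
  "cc a = (\<Sum>i\<le>a. if 2*i = a then real (a choose i) / 2^a else 0)"

lemma cos_pow_expand2:
  "cos (real j * pi / real n) ^ a = (\<Sum>i\<le>a. real (a choose i) * cos (real_of_int (2 * int i - int a) * real j * pi / real n)) / 2^a"
proof -
  have "cos (real j * pi / real n) ^ a = (2 * cos (real j * pi / real n)) ^ a / 2^a"
    by (simp add: power_mult_distrib)
  also note cos_pow_expand
  also have "(\<Sum>i\<le>a. real (a choose i) * cos ((2 * real i - real a) * (real j * pi / real n)))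
     = (\<Sum>i\<le>a. real (a choose i) * cos (real_of_int (2 * int i - int a) * real j * pi / real n))"
    by (rule sum.cong) (auto simp: field_simps)
  finally show ?thesis .
qed

lemma QS_sum: assumes "n > 0"
  shows "QS Ev n g + QS Od n g = (\<Sum>j<2*n. g (cos (real j * pi / real n))) / (2 * real n)"
    and "QS Ev n g - QS Od n g = (\<Sum>j<2*n. (-1)^j * g (cos (real j * pi / real n))) / (2 * real n)"
proof -
  show "QS Ev n g + QS Od n g = (\<Sum>j<2*n. g (cos (real j * pi / real n))) / (2 * real n)"
  proof -
    have "(if even j then x else 0) + (if odd j then x else 0) = x" for j :: nat and x :: real
      by auto
    then show ?thesis unfolding QS_def by (simp add: add_divide_distrib[symmetric] sum.distrib[symmetric])
  qed
  have "(if even j then x else 0) - (if odd j then x else 0) = (-1)^j * x" for j :: nat and x :: real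
    by auto
  then show "QS Ev n g - QS Od n g = (\<Sum>j<2*n. (-1)^j * g (cos (real j * pi / real n))) / (2 * real n)"
    unfolding QS_def by (simp add: diff_divide_distrib[symmetric] sum_subtractf[symmetric])
qed

lemma F1: assumes "n > 0" "a < 2*n"
  shows "QS Ev n (\<lambda>t. t^a) + QS Od n (\<lambda>t. t^a) = cc a"
proof -
  have "(\<Sum>j<2*n. cos (real j * pi / real n) ^ a)
      = (\<Sum>j<2*n. \<Sum>i\<le>a. real (a choose i) * cos (real_of_int (2 * int i - int a) * real j * pi / real n)) / 2^a"
    by (simp add: cos_pow_expand2 sum_divide_distrib)
  also have "\<dots> = (\<Sum>i\<le>a. real (a choose i) * (\<Sum>j<2*n. cos (real_of_int (2 * int i - int a) * real j * pi / real n))) / 2^a"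
    by (simp add: sum.swap[of _ "{..<2*n}"] sum_distrib_left)
  also have "\<dots> = (\<Sum>i\<le>a. real (a choose i) * (if 2*i = a then 2 * real n else 0)) / 2^a"
  proof -
    have "(\<Sum>j<2*n. cos (real_of_int (2 * int i - int a) * real j * pi / real n)) = (if 2*i = a then 2 * real n else 0)"
      if "i \<le> a" for i
    proof -
      have "(2*int n) dvd (2 * int i - int a) \<longleftrightarrow> 2*i = a"
      proof
        assume "(2*int n) dvd (2 * int i - int a)"
        then obtain k where k: "2 * int i - int a = 2 * int n * k" by blast
        show "2*i = a"
        proof (rule ccontr)
          assume "2*i \<noteq> a"
          then have "k \<noteq> 0" using k by auto
          then have "1 \<le> \<bar>k\<bar>" by linarith
          then have "2 * int n * 1 \<le> 2 * int n * \<bar>k\<bar>" by (intro mult_left_mono) auto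
          then have "\<bar>2 * int n * k\<bar> \<ge> 2 * int n" by (simp add: abs_mult) 
          moreover have "\<bar>2 * int i - int a\<bar> < 2 * int n" using that assms by auto
          ultimately show False using k by simp
        qed
      qed auto
      then show ?thesis using sum_cos_int[OF assms(1), of "2 * int i - int a"] by (simp only:)
    qed
    then show ?thesis by (intro arg_cong[where f="\<lambda>x. x / 2^a"] sum.cong) auto
  qed
  finally have "(\<Sum>j<2*n. cos (real j * pi / real n) ^ a) = 2 * real n * cc a"
    unfolding cc_def sum_distrib_left sum_divide_distrib by (rule trans) (rule sum.cong, auto)
  then show ?thesis using QS_sum(1)[OF assms(1), of "\<lambda>t. t^a"] assms by simp
qed

lemma F2: assumes "n > 0" "a < n"
  shows "QS Ev n (\<lambda>t. t^a) - QS Od n (\<lambda>t. t^a) = 0"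
proof -
  have neg: "(-1::real)^j * cos (real_of_int m * real j * pi / real n) = cos (real_of_int (m + int n) * real j * pi / real n)" for j m
  proof -
    have "real_of_int (m + int n) * real j * pi / real n = real_of_int m * real j * pi / real n + real j * pi"
      using assms by (simp add: field_simps)
    then show ?thesis by (simp add: cos_add)
  qed
  have "(\<Sum>j<2*n. (-1)^j * cos (real j * pi / real n) ^ a)
      = (\<Sum>j<2*n. \<Sum>i\<le>a. real (a choose i) * cos (real_of_int (2 * int i - int a + int n) * real j * pi / real n)) / 2^a"
  proof -
    have "(-1)^j * cos (real j * pi / real n) ^ a
       = (\<Sum>i\<le>a. real (a choose i) * cos (real_of_int (2 * int i - int a + int n) * real j * pi / real n)) / 2^a" for j
    proof -
      have "(-1)^j * cos (real j * pi / real n) ^ a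
        = (\<Sum>i\<le>a. real (a choose i) * ((-1)^j * cos (real_of_int (2 * int i - int a) * real j * pi / real n))) / 2^a"
        by (simp add: cos_pow_expand2 sum_distrib_left mult.left_commute)
      then show ?thesis by (simp only: neg)
    qed
    then show ?thesis by (simp add: sum_divide_distrib)
  qed
  also have "\<dots> = (\<Sum>i\<le>a. real (a choose i) * (\<Sum>j<2*n. cos (real_of_int (2 * int i - int a + int n) * real j * pi / real n))) / 2^a"
    by (simp add: sum.swap[of _ "{..<2*n}"] sum_distrib_left)
  also have "\<dots> = 0"
  proof -
    have "(\<Sum>j<2*n. cos (real_of_int (2 * int i - int a + int n) * real j * pi / real n)) = 0"
      if "i \<le> a" for i
    proof -
      have "\<not> (2*int n) dvd (2 * int i - int a + int n)"
      proof
        assume "(2*int n) dvd (2 * int i - int a + int n)"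
        then obtain k where k: "2 * int i - int a + int n = 2 * int n * k" by blast
        have "0 < 2 * int i - int a + int n" "2 * int i - int a + int n < 2 * int n" using that assms by auto
        then have "0 < k" "k < 1" using k by (auto simp: zero_less_mult_iff mult_less_cancel_left1)
        then show False by simp
      qed
      then show ?thesis using sum_cos_int[OF assms(1), of "2 * int i - int a + int n"] by (simp only:) simp
    qed
    then show ?thesis by simp
  qed
  finally show ?thesis using QS_sum(2)[OF assms(1), of "\<lambda>t. t^a"] assms by simp
qed



lemma I1_lin: assumes "n > 0"
  shows "I1 s n (\<lambda>t. \<Sum>\<alpha>\<in>A. c \<alpha> * h \<alpha> t) = (\<Sum>\<alpha>\<in>A. c \<alpha> * I1 s n (h \<alpha>))"
proof -
  have "(\<Sum>j<2*n. if P j then (\<Sum>\<alpha>\<in>A. c \<alpha> * h \<alpha> (y j)) else 0)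
      = (\<Sum>\<alpha>\<in>A. c \<alpha> * (\<Sum>j<2*n. if P j then h \<alpha> (y j) else 0))" for P y
  proof -
    have "(if P j then (\<Sum>\<alpha>\<in>A. c \<alpha> * h \<alpha> (y j)) else 0) = (\<Sum>\<alpha>\<in>A. c \<alpha> * (if P j then h \<alpha> (y j) else 0))" for j
      by simp
    then show ?thesis by (simp add: sum_distrib_left sum.swap[of _ A])
  qed
  then show ?thesis using assms
    by (simp add: I1_QS QS_def sum_divide_distrib[symmetric])
qed

lemma I1_scale: assumes "n > 0"
  shows "I1 s n (\<lambda>t. c * h t) = c * I1 s n h"
  using I1_lin[OF assms, where A="{()}" and c="\<lambda>_. c" and h="\<lambda>_. h"] by simp

lemma iterI_lin: assumes "n > 0"
  shows "iterI \<sigma> n k (\<lambda>x. \<Sum>\<alpha>\<in>A. c \<alpha> * F \<alpha> x) x = (\<Sum>\<alpha>\<in>A. c \<alpha> * iterI \<sigma> n k (F \<alpha>) x)"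
proof (induction k arbitrary: x)
  case 0 then show ?case by simp
next
  case (Suc k)
  then show ?case by (simp only: iterI.simps Suc.IH I1_lin[OF assms])
qed

lemma iterI_mono: assumes "n > 0" "k \<le> d"
  shows "iterI \<sigma> n k (\<lambda>x. \<Prod>i<d. x i ^ \<alpha> i) x
     = (\<Prod>i<k. I1 (\<sigma> i) n (\<lambda>t. t ^ \<alpha> i)) * (\<Prod>i\<in>{k..<d}. x i ^ \<alpha> i)"
  using assms(2)
proof (induction k arbitrary: x)
  case 0 then show ?case by (simp add: atLeast0LessThan)
next
  case (Suc k)
  then have kd: "k < d" by simp
  have "(\<Prod>i\<in>{k..<d}. (x(k := t)) i ^ \<alpha> i) = t ^ \<alpha> k * (\<Prod>i\<in>{Suc k..<d}. x i ^ \<alpha> i)" for t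
    using kd by (simp add: prod.atLeast_Suc_lessThan)
  then have eq: "iterI \<sigma> n k (\<lambda>x. \<Prod>i<d. x i ^ \<alpha> i) (x(k := t))
     = ((\<Prod>i<k. I1 (\<sigma> i) n (\<lambda>t. t ^ \<alpha> i)) * (\<Prod>i\<in>{Suc k..<d}. x i ^ \<alpha> i)) * t ^ \<alpha> k" for t
    using Suc by (simp add: mult_ac)
  have "iterI \<sigma> n (Suc k) (\<lambda>x. \<Prod>i<d. x i ^ \<alpha> i) x
     = I1 (\<sigma> k) n (\<lambda>t. ((\<Prod>i<k. I1 (\<sigma> i) n (\<lambda>t. t ^ \<alpha> i)) * (\<Prod>i\<in>{Suc k..<d}. x i ^ \<alpha> i)) * t ^ \<alpha> k)"
    by (simp only: iterI.simps eq)
  also have "\<dots> = (\<Prod>i<Suc k. I1 (\<sigma> i) n (\<lambda>t. t ^ \<alpha> i)) * (\<Prod>i\<in>{Suc k..<d}. x i ^ \<alpha> i)"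
    by (simp only: I1_scale[OF assms(1)]) (simp add: mult_ac)
  finally show ?case .
qed

lemma I1_sum_swap: assumes "n > 0" "a < 2*n"
  shows "I1 s n (\<lambda>t. t^a) + I1 (swapEO s) n (\<lambda>t. t^a) = cc a"
  using F1[OF assms] by (cases s) (auto simp: I1_QS[OF assms(1)])

lemma I1_half: assumes "n > 0" "a < n"
  shows "I1 s n (\<lambda>t. t^a) = cc a / 2"
  using F1[OF assms(1), of a] F2[OF assms] assms by (cases s) (auto simp: I1_QS[OF assms(1)])

lemma mono_comb:
  assumes n: "n > 0" and d: "d \<ge> 1" and deg: "(\<Sum>i<d. \<alpha> i) \<le> 2*n - 1"
  shows "2^(d-1) * ((\<Prod>i<d. I1 (\<sigma> i) n (\<lambda>t. t ^ \<alpha> i)) + (\<Prod>i<d. I1 (swapEO (\<sigma> i)) n (\<lambda>t. t ^ \<alpha> i)))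
     = (\<Prod>i<d. cc (\<alpha> i))"
proof (cases "\<forall>i<d. \<alpha> i < n")
  case True
  have "(\<Prod>i<d. I1 (\<sigma> i) n (\<lambda>t. t ^ \<alpha> i)) = (\<Prod>i<d. cc (\<alpha> i) / 2)"
    by (rule prod.cong) (auto simp: I1_half[OF n] True)
  moreover have "(\<Prod>i<d. I1 (swapEO (\<sigma> i)) n (\<lambda>t. t ^ \<alpha> i)) = (\<Prod>i<d. cc (\<alpha> i) / 2)"
    by (rule prod.cong) (auto simp: I1_half[OF n] True)
  moreover have "(2::real)^d = 2^(d-1) * 2" using d by (cases d) auto
  ultimately show ?thesis by (simp add: prod_dividef)
next
  case False
  then obtain k where k: "k < d" "\<alpha> k \<ge> n" by auto
  have ak: "\<alpha> k < 2*n"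
  proof -
    have "\<alpha> k \<le> (\<Sum>i<d. \<alpha> i)" using k by (intro member_le_sum) auto
    then show ?thesis using deg n by linarith
  qed
  have others: "\<alpha> i < n" if "i < d" "i \<noteq> k" for i
  proof -
    have "\<alpha> k + \<alpha> i = (\<Sum>i\<in>{k, i}. \<alpha> i)" using that by simp
    also have "\<dots> \<le> (\<Sum>i<d. \<alpha> i)" using that k by (intro sum_mono2) auto
    finally show ?thesis using deg n k by linarith
  qed
  let ?R = "{..<d} - {k}"
  have R: "\<And>s. (\<Prod>i\<in>?R. I1 (s i) n (\<lambda>t. t ^ \<alpha> i)) = (\<Prod>i\<in>?R. cc (\<alpha> i) / 2)"
    by (rule prod.cong) (auto simp: I1_half[OF n] others)
  have cR: "card ?R = d - 1" using k by simp
  have "(\<Prod>i<d. I1 (\<sigma> i) n (\<lambda>t. t ^ \<alpha> i)) + (\<Prod>i<d. I1 (swapEO (\<sigma> i)) n (\<lambda>t. t ^ \<alpha> i))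
      = (I1 (\<sigma> k) n (\<lambda>t. t ^ \<alpha> k) + I1 (swapEO (\<sigma> k)) n (\<lambda>t. t ^ \<alpha> k)) * (\<Prod>i\<in>?R. cc (\<alpha> i) / 2)"
    using k R[of \<sigma>] R[of "swapEO \<circ> \<sigma>"] by (simp add: prod.remove distrib_right)
  also have "\<dots> = cc (\<alpha> k) * ((\<Prod>i\<in>?R. cc (\<alpha> i)) / 2^(d-1))"
    using I1_sum_swap[OF n ak] cR by (simp add: prod_dividef)
  finally show ?thesis using k by (simp add: prod.remove)
qed



lemma ftc_m11:
  fixes F f :: "real \<Rightarrow> real"
  assumes D: "\<And>t. -1 < t \<Longrightarrow> t < 1 \<Longrightarrow> DERIV F t :> f t"
    and C: "\<And>t. -1 < t \<Longrightarrow> t < 1 \<Longrightarrow> isCont f t"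
    and P: "\<And>t. -1 < t \<Longrightarrow> t < 1 \<Longrightarrow> 0 \<le> f t"
    and Fc: "continuous_on {-1..1} F"
  shows "set_integrable lborel {-1<..<1} f" "(LINT t:{-1<..<1}|lborel. f t) = F 1 - F (-1)"
proof -
  have A: "((F \<circ> real_of_ereal) \<longlongrightarrow> F (-1)) (at_right (ereal (-1)))"
  proof -
    have "(F \<longlongrightarrow> F (-1)) (at (-1) within {-1..1})"
      using Fc by (simp add: continuous_on_def)
    then have "(F \<longlongrightarrow> F (-1)) (at_right (-1))" by (simp add: at_within_Icc_at_right)
    then show ?thesis by (simp add: ereal_tendsto_simps1)
  qed
  have B: "((F \<circ> real_of_ereal) \<longlongrightarrow> F 1) (at_left (ereal 1))"
  proof -
    have "(F \<longlongrightarrow> F 1) (at 1 within {-1..1})"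
      using Fc by (simp add: continuous_on_def)
    then have "(F \<longlongrightarrow> F 1) (at_left 1)" by (simp add: at_within_Icc_at_left)
    then show ?thesis by (simp add: ereal_tendsto_simps1)
  qed
  have lt: "ereal (-1) < ereal 1" by simp
  note R = interval_integral_FTC_nonneg[OF lt, of F f, OF _ _ _ A B]
  have r1: "set_integrable lborel (einterval (ereal (-1)) (ereal 1)) f"
    by (rule R(1)) (auto intro: D C P AE_I2)
  have r2: "(LBINT x=ereal (-1)..ereal 1. f x) = F 1 - F (-1)"
    by (rule R(2)) (auto intro: D C P AE_I2)
  show "set_integrable lborel {-1<..<1} f" using r1 by simp
  show "(LINT t:{-1<..<1}|lborel. f t) = F 1 - F (-1)" using r2
    by (simp add: interval_lebesgue_integral_le_eq)
qed

definition SS :: "int \<Rightarrow> real \<Rightarrow> real" where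
  "SS m \<theta> = (if m = 0 then \<theta> else sin (real_of_int m * \<theta>) / real_of_int m)"

definition GG :: "nat \<Rightarrow> real \<Rightarrow> real" where
  "GG a \<theta> = (\<Sum>i\<le>a. real (a choose i) / 2^a * SS (2 * int i - int a) \<theta>)"

lemma SS_deriv: "DERIV (SS m) \<theta> :> cos (real_of_int m * \<theta>)"
proof (cases "m = 0")
  case True
  then show ?thesis unfolding SS_def by (auto intro!: derivative_eq_intros)
next
  case False
  have "DERIV (\<lambda>\<theta>. sin (real_of_int m * \<theta>) / real_of_int m) \<theta> :> cos (real_of_int m * \<theta>)"
    using False by (auto intro!: derivative_eq_intros)
  then show ?thesis using False unfolding SS_def by simp
qed

lemma GG_deriv: "DERIV (GG a) \<theta> :> cos \<theta> ^ a"
proof -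
  have "DERIV (GG a) \<theta> :> (\<Sum>i\<le>a. real (a choose i) / 2^a * cos (real_of_int (2 * int i - int a) * \<theta>))"
    unfolding GG_def by (intro DERIV_sum DERIV_cmult SS_deriv)
  also have "(\<Sum>i\<le>a. real (a choose i) / 2^a * cos (real_of_int (2 * int i - int a) * \<theta>)) = cos \<theta> ^ a"
  proof -
    have "cos \<theta> ^ a = (2 * cos \<theta>) ^ a / 2^a" by (simp add: power_mult_distrib)
    also have "\<dots> = (\<Sum>i\<le>a. real (a choose i) * cos ((2 * real i - real a) * \<theta>)) / 2^a"
      by (simp only: cos_pow_expand)
    finally show ?thesis by (simp add: sum_divide_distrib)
  qed
  finally show ?thesis .
qed

lemma GG_cont: "continuous_on S (GG a)"
  using GG_deriv by (meson DERIV_isCont continuous_at_imp_continuous_on)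

lemma GG_vals: "GG a 0 = 0" "GG a pi = pi * cc a"
proof -
  have "SS m 0 = 0" for m unfolding SS_def by simp
  then show "GG a 0 = 0" unfolding GG_def by simp
  have "SS (2 * int i - int a) pi = (if 2 * i = a then pi else 0)" for i
  proof -
    have "sin (real_of_int (2 * int i - int a) * pi) = 0"
      by (metis mult.commute sin_npi_int)
    then show ?thesis unfolding SS_def by auto
  qed
  then show "GG a pi = pi * cc a" unfolding GG_def cc_def sum_distrib_left
    by (intro sum.cong) auto
qed

definition FF :: "nat \<Rightarrow> real \<Rightarrow> real" where
  "FF a t = arcsin t / pi - GG a (arccos t) / pi"

lemma FF_deriv: assumes "-1 < t" "t < 1"
  shows "DERIV (FF a) t :> (1 + t^a) * (1 / sqrt (1 - t^2)) / pi"
proof -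
  have s: "sqrt (1 - t^2) \<noteq> 0" using assms
    by (metis abs_square_eq_1 abs_less_iff less_irrefl minus_less_iff power2_eq_1_iff real_sqrt_eq_zero_cancel_iff right_minus_eq)
  have d2: "DERIV (\<lambda>t. GG a (arccos t)) t :> cos (arccos t) ^ a * inverse (- sqrt (1 - t^2))"
    by (rule DERIV_chain2[OF GG_deriv DERIV_arccos[OF assms]])
  have "DERIV (FF a) t :> inverse (sqrt (1 - t^2)) / pi - cos (arccos t) ^ a * inverse (- sqrt (1 - t^2)) / pi"
    unfolding FF_def by (intro DERIV_diff DERIV_cdivide DERIV_arcsin[OF assms] d2)
  moreover have "inverse (sqrt (1 - t^2)) / pi - cos (arccos t) ^ a * inverse (- sqrt (1 - t^2)) / pi = (1 + t^a) * (1 / sqrt (1 - t^2)) / pi"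
    using assms by (simp add: cos_arccos divide_simps)
  ultimately show ?thesis by simp
qed

lemma FF_cont: "continuous_on {-1..1} (FF a)"
proof -
  have "continuous_on {-1..1} (\<lambda>t. GG a (arccos t))"
    by (rule continuous_on_compose2[OF GG_cont continuous_on_arccos']) auto
  then show ?thesis unfolding FF_def
    by (intro continuous_on_diff continuous_on_divide continuous_on_arcsin' continuous_on_const) auto
qed

lemma FF_vals: "FF a 1 - FF a (-1) = 1 + cc a"
  unfolding FF_def using GG_vals[of a] by (simp add: field_simps)

definition ww :: "nat \<Rightarrow> real \<Rightarrow> real" where
  "ww a t = indicator {-1..1} t * (t^a * (1 / sqrt (1 - t^2) / pi))"

lemma ww_int: "integrable lborel (ww a)" "integral\<^sup>L lborel (ww a) = cc a"
proof -
  define h1 where "h1 = (\<lambda>t::real. (1 + t^a) * (1 / sqrt (1 - t^2)) / pi)"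
  define h0 where "h0 = (\<lambda>t::real. (1 + t^0) * (1 / sqrt (1 - t^2)) / pi)"
  have sq: "sqrt (1 - t^2) \<noteq> 0" if "-1 < t" "t < 1" for t::real
    using that by (metis abs_square_eq_1 abs_less_iff less_irrefl minus_less_iff power2_eq_1_iff real_sqrt_eq_zero_cancel_iff right_minus_eq)
  have nn: "0 \<le> (1 + t^k) * (1 / sqrt (1 - t^2)) / pi" if "-1 < t" "t < 1" for t::real and k
  proof -
    have "\<bar>t\<bar> \<le> 1" using that by auto
    then have "\<bar>t\<bar>^k \<le> 1" by (intro power_le_one) auto
    then have "\<bar>t^k\<bar> \<le> 1" by (simp add: power_abs)
    then have "0 \<le> 1 + t^k" by linarith
    moreover have "t^2 \<le> 1" using \<open>\<bar>t\<bar> \<le> 1\<close> by (simp add: abs_square_le_1)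
    then have "0 \<le> 1 / sqrt (1 - t^2)" by simp
    ultimately show ?thesis by simp
  qed
  have cnt: "isCont (\<lambda>t. (1 + t^k) * (1 / sqrt (1 - t^2)) / pi) t" if "-1 < t" "t < 1" for t::real and k
    using sq[OF that] by (intro continuous_intros) auto
  note I1 = ftc_m11[of "FF a" h1, unfolded h1_def, OF FF_deriv cnt nn FF_cont]
  note I0 = ftc_m11[of "FF 0" h0, unfolded h0_def, OF FF_deriv cnt nn FF_cont]
  have ind: "indicator {-1..1} t * g t = indicator {-1<..<1} t * g t" if "g 1 = 0" "g (-1) = 0" for t :: real and g :: "real \<Rightarrow> real"
    using that by (cases "t = 1 \<or> t = -1") (auto split: split_indicator)
  have eq: "ww a t = indicator {-1<..<1} t * ((1 + t^a) * (1 / sqrt (1 - t^2)) / pi)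
      - (1/2) * (indicator {-1<..<1} t * ((1 + t^0) * (1 / sqrt (1 - t^2)) / pi))" for t
    unfolding ww_def by (subst ind[where g="\<lambda>t. t^a * (1 / sqrt (1 - t^2) / pi)"]) (auto simp: add_divide_distrib ring_distribs)
  have i1: "integrable lborel (\<lambda>t. indicator {-1<..<1} t * ((1 + t^a) * (1 / sqrt (1 - t^2)) / pi))"
    using I1(1) by (simp add: set_integrable_def)
  have i0: "integrable lborel (\<lambda>t. indicator {-1<..<1} t * ((1 + t^0) * (1 / sqrt (1 - t^2)) / pi))"
    using I0(1) by (simp add: set_integrable_def)
  have weq: "ww a = (\<lambda>t. indicator {-1<..<1} t * ((1 + t^a) * (1 / sqrt (1 - t^2)) / pi)
      - (1/2) * (indicator {-1<..<1} t * ((1 + t^0) * (1 / sqrt (1 - t^2)) / pi)))"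
    using eq by auto
  have i0': "integrable lborel (\<lambda>t. (1/2) * (indicator {-1<..<1} t * ((1 + t^0) * (1 / sqrt (1 - t^2)) / pi)))"
    using i0 by (rule integrable_mult_right)
  show "integrable lborel (ww a)" unfolding weq using i1 i0' by (rule Bochner_Integration.integrable_diff)
  have "integral\<^sup>L lborel (ww a) = (1 + cc a) - (1/2) * (1 + cc 0)"
    unfolding weq Bochner_Integration.integral_diff[OF i1 i0'] integral_mult_right_zero
    using I1(2) I0(2) FF_vals[of a] FF_vals[of 0] by (simp add: set_lebesgue_integral_def)
  moreover have "cc 0 = 1" by (simp add: cc_def)
  ultimately show "integral\<^sup>L lborel (ww a) = cc a" by simp
qed



lemma indicator_PiE_prod:
  assumes "x \<in> PiE I (\<lambda>_. UNIV)" "finite I"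
  shows "indicator (PiE I (\<lambda>_. B)) x = (\<Prod>i\<in>I. indicator B (x i) :: real)"
proof (cases "x \<in> PiE I (\<lambda>_. B)")
  case True
  then show ?thesis by (auto simp: PiE_def indicator_def intro!: prod.neutral)
next
  case False
  then obtain i where "i \<in> I" "x i \<notin> B" using assms by (auto simp: PiE_def Pi_def)
  then have "(\<Prod>i\<in>I. indicator B (x i) :: real) = 0"
    using assms(2) by (intro prod_zero) (auto intro!: bexI[of _ i])
  then show ?thesis using False by simp
qed

lemma integrand_eq:
  assumes "x \<in> PiE {..<d} (\<lambda>_. UNIV)"
  shows "indicator (PiE {..<d} (\<lambda>_. {-1..1::real})) x * ((\<Sum>\<alpha>\<in>A. c \<alpha> * (\<Prod>i<d. x i ^ \<alpha> i)) * chebW d x)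
       = (\<Sum>\<alpha>\<in>A. c \<alpha> * (\<Prod>i<d. ww (\<alpha> i) (x i)))"
proof -
  have ch: "chebW d x = (\<Prod>i<d. 1 / sqrt (1 - (x i)^2) / pi)"
  proof -
    have "pi ^ d = (\<Prod>i<d. pi)" by simp
    then show ?thesis unfolding chebW_def by (simp only: prod_dividef)
  qed
  have "(\<Prod>i<d. ww (\<alpha> i) (x i)) = (\<Prod>i<d. indicator {-1..1} (x i)) * ((\<Prod>i<d. x i ^ \<alpha> i) * chebW d x)" for \<alpha>
    unfolding ch ww_def prod.distrib[symmetric] by (rule prod.cong) auto
  then show ?thesis
    unfolding indicator_PiE_prod[OF assms finite_lessThan]
    by (simp add: sum_distrib_left sum_distrib_right mult_ac)
qed

lemma integral_poly:
  fixes c :: "(nat \<Rightarrow> nat) \<Rightarrow> real"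
  shows "(\<integral>x. indicator (PiE {..<d} (\<lambda>_. {-1..1::real})) x * ((\<Sum>\<alpha>\<in>A. c \<alpha> * (\<Prod>i<d. x i ^ \<alpha> i)) * chebW d x)
               \<partial>(PiM {..<d} (\<lambda>_. lborel)))
       = (\<Sum>\<alpha>\<in>A. c \<alpha> * (\<Prod>i<d. cc (\<alpha> i)))"
proof -
  interpret product_sigma_finite "\<lambda>_::nat. lborel :: real measure"
    by (intro product_sigma_finite.intro) (simp add: lborel.sigma_finite_measure_axioms)
  have "(\<integral>x. indicator (PiE {..<d} (\<lambda>_. {-1..1::real})) x * ((\<Sum>\<alpha>\<in>A. c \<alpha> * (\<Prod>i<d. x i ^ \<alpha> i)) * chebW d x)
               \<partial>(PiM {..<d} (\<lambda>_. lborel)))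
     = (\<integral>x. (\<Sum>\<alpha>\<in>A. c \<alpha> * (\<Prod>i<d. ww (\<alpha> i) (x i))) \<partial>(PiM {..<d} (\<lambda>_. lborel)))"
    by (rule Bochner_Integration.integral_cong[OF refl], rule integrand_eq) (simp add: space_PiM)
  also have "\<dots> = (\<Sum>\<alpha>\<in>A. c \<alpha> * (\<integral>x. (\<Prod>i<d. ww (\<alpha> i) (x i)) \<partial>(PiM {..<d} (\<lambda>_. lborel))))"
    by (subst Bochner_Integration.integral_sum) (auto intro!: integrable_mult_right product_integrable_prod ww_int)
  also have "\<dots> = (\<Sum>\<alpha>\<in>A. c \<alpha> * (\<Prod>i<d. cc (\<alpha> i)))"
    by (subst product_integral_prod) (auto simp: ww_int)
  finally show ?thesis .
qed

lemma Ind_poly: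
  assumes n: "n > 0"
  shows "Ind \<sigma> n d (\<lambda>x. \<Sum>\<alpha>\<in>A. c \<alpha> * (\<Prod>i<d. x i ^ \<alpha> i))
     = (\<Sum>\<alpha>\<in>A. c \<alpha> * ((\<Prod>i<d. I1 (\<sigma> i) n (\<lambda>t. t ^ \<alpha> i)) + (\<Prod>i<d. I1 (swapEO (\<sigma> i)) n (\<lambda>t. t ^ \<alpha> i))))"
  unfolding Ind_def iterI_lin[OF n] iterI_mono[OF n order_refl]
  by (simp add: sum.distrib distrib_left)

lemma part1:
  assumes d: "d \<ge> 1" and n: "n \<ge> 1" and f: "poly_deg_le d (2 * n - 1) f"
  shows "(\<integral>x. indicator (PiE {..<d} (\<lambda>_. {-1..1::real})) x * (f x * chebW d x)
               \<partial>(PiM {..<d} (\<lambda>_. lborel)))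
            = 2 ^ (d - 1) * Ind \<sigma> n d f"
proof -
  define A where "A = {\<alpha>::nat\<Rightarrow>nat. (\<forall>i\<ge>d. \<alpha> i = 0) \<and> (\<Sum>i<d. \<alpha> i) \<le> 2*n - 1}"
  obtain c where c: "\<forall>x. f x = (\<Sum>\<alpha>\<in>A. c \<alpha> * (\<Prod>i<d. x i ^ \<alpha> i))"
    using f unfolding poly_deg_le_def A_def by blast
  then have fe: "f = (\<lambda>x. \<Sum>\<alpha>\<in>A. c \<alpha> * (\<Prod>i<d. x i ^ \<alpha> i))" by auto
  have n0: "n > 0" using n by simp
  have "2 ^ (d - 1) * Ind \<sigma> n d f = (\<Sum>\<alpha>\<in>A. c \<alpha> * (2 ^ (d - 1) * ((\<Prod>i<d. I1 (\<sigma> i) n (\<lambda>t. t ^ \<alpha> i)) + (\<Prod>i<d. I1 (swapEO (\<sigma> i)) n (\<lambda>t. t ^ \<alpha> i)))))"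
    unfolding fe Ind_poly[OF n0] by (simp add: sum_distrib_left mult_ac)
  also have "\<dots> = (\<Sum>\<alpha>\<in>A. c \<alpha> * (\<Prod>i<d. cc (\<alpha> i)))"
  proof (rule sum.cong[OF refl])
    fix \<alpha> assume "\<alpha> \<in> A"
    then have "(\<Sum>i<d. \<alpha> i) \<le> 2*n - 1" by (simp add: A_def)
    from mono_comb[OF n0 d this, of \<sigma>] show "c \<alpha> * (2 ^ (d - 1) * ((\<Prod>i<d. I1 (\<sigma> i) n (\<lambda>t. t ^ \<alpha> i)) + (\<Prod>i<d. I1 (swapEO (\<sigma> i)) n (\<lambda>t. t ^ \<alpha> i))))
       = c \<alpha> * (\<Prod>i<d. cc (\<alpha> i))" by simp
  qed
  finally show ?thesis unfolding fe integral_poly by simp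
qed



lemma cosj_inj: assumes "n \<ge> 1" "j \<le> n" "k \<le> n" "cos (real j * pi / real n) = cos (real k * pi / real n)"
  shows "j = k"
proof -
  have "real j * pi / real n = real k * pi / real n"
  proof (rule cos_inj_pi)
    show "0 \<le> real j * pi / real n" "0 \<le> real k * pi / real n" by auto
    show "real j * pi / real n \<le> pi" "real k * pi / real n \<le> pi" using assms
      by (auto simp: divide_le_eq mult.commute intro: mult_left_mono)
  qed (rule assms(4))
  then show ?thesis using assms(1) by (simp add: field_simps)
qed

definition Pp :: "EO \<Rightarrow> nat \<Rightarrow> bool" where "Pp s j = (case s of Ev \<Rightarrow> even j | Od \<Rightarrow> odd j)"

lemma G_img: "G s n = (\<lambda>j. cos (real j * pi / real n)) ` {j. j \<le> n \<and> Pp s j}"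
  unfolding G_def Pp_def by auto

lemma card_G: assumes "n \<ge> 1"
  shows "card (G s n) = card {j. j \<le> n \<and> Pp s j}"
  unfolding G_img by (rule card_image) (auto simp: inj_on_def intro: cosj_inj[OF assms])

lemma card_even: "card {j. j \<le> n \<and> even j} = n div 2 + 1"
proof -
  have "{j. j \<le> n \<and> even j} = (\<lambda>i. 2*i) ` {..n div 2}" by (auto elim!: evenE)
  then show ?thesis by (simp add: card_image inj_on_def)
qed

lemma card_odd: "card {j. j \<le> n \<and> odd j} = (n + 1) div 2"
proof -
  have "{j. j \<le> n \<and> odd j} = (\<lambda>i. 2*i+1) ` {..<(n + 1) div 2}" by (auto elim!: oddE)
  then show ?thesis by (simp add: card_image inj_on_def)
qed

lemma card_G_val: assumes "n \<ge> 1"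
  shows "card (G s n) = (case s of Ev \<Rightarrow> n div 2 + 1 | Od \<Rightarrow> (n + 1) div 2)"
  using card_G[OF assms, of s] card_even[of n] card_odd[of n] by (cases s) (auto simp: Pp_def)

lemma G_disj: assumes "n \<ge> 1" shows "G s n \<inter> G (swapEO s) n = {}"
proof -
  have "Pp s j \<noteq> Pp (swapEO s) j" for j by (cases s) (auto simp: Pp_def)
  then show ?thesis unfolding G_img using cosj_inj[OF assms] by auto
qed

lemma finite_G: "finite (G s n)"
  unfolding G_img by auto

lemma num_nodes_eq: assumes "n \<ge> 1" "d \<ge> 1"
  shows "num_nodes \<sigma> n d = (\<Prod>i<d. card (G (\<sigma> i) n)) + (\<Prod>i<d. card (G (swapEO (\<sigma> i)) n))"
proof -
  have disj: "grid \<sigma> n d \<inter> grid (swapEO \<circ> \<sigma>) n d = {}"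
  proof (rule ccontr)
    assume "grid \<sigma> n d \<inter> grid (swapEO \<circ> \<sigma>) n d \<noteq> {}"
    then obtain x where "x \<in> grid \<sigma> n d" "x \<in> grid (swapEO \<circ> \<sigma>) n d" by auto
    then have "x 0 \<in> G (\<sigma> 0) n" "x 0 \<in> G (swapEO (\<sigma> 0)) n" using assms(2)
      by (auto simp: grid_def PiE_def Pi_def)
    then show False using G_disj[OF assms(1), of "\<sigma> 0"] by auto
  qed
  have fin: "finite (grid s n d)" for s unfolding grid_def by (intro finite_PiE) (auto simp: finite_G)
  show ?thesis unfolding num_nodes_def card_Un_disjoint[OF fin fin disj]
    by (simp add: grid_def card_PiE)
qed

lemma pow_diff_bound: fixes x :: real assumes "x \<ge> 0"
  shows "(x + 1)^d - x^d \<le> real d * (x + 1)^(d - 1)"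
proof (induction d)
  case 0 then show ?case by simp
next
  case (Suc d)
  have "(x + 1)^Suc d - x^Suc d = (x + 1) * ((x + 1)^d - x^d) + x^d" by (simp add: algebra_simps)
  also have "\<dots> \<le> (x + 1) * (real d * (x + 1)^(d - 1)) + (x + 1)^d"
    using Suc assms by (intro add_mono mult_left_mono power_mono) auto
  also have "(x + 1) * (real d * (x + 1)^(d - 1)) = real d * (x + 1)^d"
    by (cases d) auto
  finally show ?case by (simp add: algebra_simps)
qed

lemma part2:
  assumes d: "d \<ge> 1"
  shows "(\<lambda>n. real (num_nodes \<sigma> n d) - 2 * real (n div 2) ^ d) \<in> O(\<lambda>n. real (n div 2) ^ d / real n)"
proof (rule bigoI[where c = "3 * real d * 2^d"])
  show "\<forall>\<^sub>F n in at_top. norm (real (num_nodes \<sigma> n d) - 2 * real (n div 2) ^ d)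
          \<le> (3 * real d * 2^d) * norm (real (n div 2) ^ d / real n)"
  proof (rule eventually_mono[OF eventually_ge_at_top[of 2]])
    fix n :: nat assume n: "2 \<le> n"
    define h where "h = real (n div 2)"
    have h1: "h \<ge> 1" using n by (simp add: h_def)
    have "n \<le> 3 * (n div 2)" using n by presburger
    then have hn: "real n \<le> 3 * h" unfolding h_def by linarith
    have gb: "h \<le> real (card (G s n)) \<and> real (card (G s n)) \<le> h + 1" for s
      using card_G_val[of n s] n by (cases s) (auto simp: h_def)
    have lo: "h^d \<le> (\<Prod>i<d. real (card (G (s i) n)))" for s
      using prod_mono[of "{..<d}" "\<lambda>_. h" "\<lambda>i. real (card (G (s i) n))"] gb h1 by auto
    have up: "(\<Prod>i<d. real (card (G (s i) n))) \<le> (h + 1)^d" for s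
      using prod_mono[of "{..<d}" "\<lambda>i. real (card (G (s i) n))" "\<lambda>_. h + 1"] gb h1 by auto
    have N: "real (num_nodes \<sigma> n d) = (\<Prod>i<d. real (card (G (\<sigma> i) n))) + (\<Prod>i<d. real (card (G (swapEO (\<sigma> i)) n)))"
      using num_nodes_eq[of n d \<sigma>] n d by simp
    have lb: "0 \<le> real (num_nodes \<sigma> n d) - 2 * h ^ d"
      using N lo[of \<sigma>] lo[of "\<lambda>i. swapEO (\<sigma> i)"] by simp
    moreover have "real (num_nodes \<sigma> n d) - 2 * h ^ d \<le> 2 * ((h + 1)^d - h^d)"
      using N up[of \<sigma>] up[of "\<lambda>i. swapEO (\<sigma> i)"] by simp
    moreover have "(h + 1)^d - h^d \<le> real d * (h + 1)^(d - 1)"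
      using pow_diff_bound[of h d] h1 by simp
    moreover have "(h + 1)^(d - 1) \<le> (2 * h)^(d - 1)"
      using h1 by (intro power_mono) auto
    moreover have "(2 * h)^(d - 1) = 2^(d-1) * h^(d - 1)" by (simp add: power_mult_distrib)
    moreover have "h^(d - 1) * real n \<le> 3 * h^d"
    proof -
      have "h^(d - 1) * real n \<le> h^(d - 1) * (3 * h)" using hn h1 by (intro mult_left_mono) auto
      also have "\<dots> = 3 * h^d" using d by (cases d) auto
      finally show ?thesis .
    qed
    moreover have "(2::real)^d = 2 * 2^(d-1)" using d by (cases d) auto
    ultimately have bnd: "real (num_nodes \<sigma> n d) - 2 * h ^ d \<le> (3 * real d * 2^d) * (h^d / real n)"
    proof -
      assume a: "0 \<le> real (num_nodes \<sigma> n d) - 2 * h ^ d"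
        "real (num_nodes \<sigma> n d) - 2 * h ^ d \<le> 2 * ((h + 1)^d - h^d)"
        "(h + 1)^d - h^d \<le> real d * (h + 1)^(d - 1)"
        "(h + 1)^(d - 1) \<le> (2 * h)^(d - 1)"
        "(2 * h)^(d - 1) = 2^(d-1) * h^(d - 1)"
        "h^(d - 1) * real n \<le> 3 * h^d"
        "(2::real)^d = 2 * 2^(d-1)"
      have "real (num_nodes \<sigma> n d) - 2 * h ^ d \<le> 2 * (real d * (2^(d-1) * h^(d - 1)))"
        using a(2,3,4,5) by (smt (verit) mult_left_mono of_nat_0_le_iff)
      also have "\<dots> = (real d * 2^d) * h^(d-1)" using a(7) by simp
      also have "\<dots> \<le> (real d * 2^d) * (3 * h^d / real n)"
        using a(6) n by (intro mult_left_mono) (auto simp: field_simps)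
      finally show ?thesis by (simp add: mult_ac)
    qed
    show "norm (real (num_nodes \<sigma> n d) - 2 * real (n div 2) ^ d)
          \<le> (3 * real d * 2^d) * norm (real (n div 2) ^ d / real n)"
      unfolding h_def[symmetric] using h1 bnd lb by simp
  qed
qed


theorem theorem1:
  fixes d :: nat and \<sigma> :: "nat \<Rightarrow> EO"
  assumes "d \<ge> 1"
  shows "(\<forall>n f. n \<ge> 1 \<and> poly_deg_le d (2 * n - 1) f \<longrightarrow>
            (\<integral>x. indicator (PiE {..<d} (\<lambda>_. {-1..1::real})) x * (f x * chebW d x)
               \<partial>(PiM {..<d} (\<lambda>_. lborel)))
            = 2 ^ (d - 1) * Ind \<sigma> n d f)
       \<and> (\<lambda>n. real (num_nodes \<sigma> n d) - 2 * real (n div 2) ^ d)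
           \<in> O(\<lambda>n. real (n div 2) ^ d / real n)"
  using part1[OF assms] part2[OF assms] by blast

end
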